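(* Let $(X,\mathsf d)$ be an extended metric space, $K\in\mathbb R$, $E:X\to\mathbb R\cup\{+\infty\}$ lower semicontinuous, $\mu$ a probability measure on $X$ with finite variance, and $\epsilon\ge0$. Assume there is an $\mathrm{EVI}_K$ gradient flow $(y_t)_{t>0}$ of $E$ starting from a point $y\in X$ with $\int_X\mathsf d^2(y,z)\,d\mu(z)\le\mathrm{Var}(\mu)+\epsilon$. Then for all $t>0$, $$E(y_t)\le\int_XE(z)\,d\mu(z)-\frac K2\mathrm{Var}(\mu)+\frac{\epsilon}{2I_K(t)},\qquad I_K(t)=\int_0^te^{Kr}\,dr.$$ In particular, if $\mu$ has a barycenter $\bar y$ and there is an $\mathrm{EVI}_K$ gradient flow of $E$ starting from $\bar y$, then $$E(\bar y)\le\int_XE(z)\,d\mu(z)-\frac K2\int_X\mathsf d^2(\bar y,z)\,d\mu(z).$$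
   Context: Extended metric space: $\mathsf d:X\times X\to[0,\infty]$ symmetric, triangle inequality, $\mathsf d(x,y)=0$ iff $x=y$. $\mathrm{Var}(\mu)=\inf_{x\in X}\int\mathsf d^2(x,z)\,d\mu(z)$; a barycenter is a minimizer. $\mathrm{EVI}_K$ gradient flow of $E$ starting from $y_0$: a locally absolutely continuous curve $(0,\infty)\ni t\mapsto y_t$ with $y_t\to y_0$ in $\mathsf d$ as $t\to0$ such that for every $z\in\mathrm D(E)=\{E<\infty\}$ with $\mathsf d(z,y_t)<\infty$ for some (hence all) $t>0$: $\frac12\frac d{dt}\mathsf d^2(y_t,z)+\frac K2\mathsf d^2(y_t,z)\le E(z)-E(y_t)$ for a.e. $t>0$; if $y_0\notin\mathrm D(E)$ one requires additionally $\liminf_{t\downarrow0}E(y_t)\ge E(y_0)$ and $\mathsf d(y_t,w)\to\mathsf d(y_0,w)$ for all $w\in\overline{\mathrm D(E)}$. *)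

theory Defs
  imports "HOL-Analysis.Analysis" "HOL-Probability.Probability"
begin

definition ext_metric :: "('a \<Rightarrow> 'a \<Rightarrow> ennreal) \<Rightarrow> bool" where
  "ext_metric d \<longleftrightarrow>
     (\<forall>x y. d x y = d y x) \<and>
     (\<forall>x y z. d x z \<le> d x y + d y z) \<and>
     (\<forall>x y. d x y = 0 \<longleftrightarrow> x = y)"

definition ed_open :: "('a \<Rightarrow> 'a \<Rightarrow> ennreal) \<Rightarrow> 'a set set" where
  "ed_open d = {U. \<forall>x\<in>U. \<exists>r::real>0. \<forall>z. d x z < ennreal r \<longrightarrow> z \<in> U}"

definition ed_borel :: "('a \<Rightarrow> 'a \<Rightarrow> ennreal) \<Rightarrow> 'a set set" where
  "ed_borel d = sigma_sets UNIV (ed_open d)"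

text \<open>Lower semicontinuity (sequential, which is equivalent in metric topologies).\<close>
definition ed_lsc :: "('a \<Rightarrow> 'a \<Rightarrow> ennreal) \<Rightarrow> ('a \<Rightarrow> ereal) \<Rightarrow> bool" where
  "ed_lsc d E \<longleftrightarrow>
     (\<forall>x xs. ((\<lambda>n. d (xs n) x) \<longlonglongrightarrow> 0) \<longrightarrow> E x \<le> liminf (\<lambda>n. E (xs n)))"

definition ed_prob :: "('a \<Rightarrow> 'a \<Rightarrow> ennreal) \<Rightarrow> 'a measure \<Rightarrow> bool" where
  "ed_prob d \<mu> \<longleftrightarrow> prob_space \<mu> \<and> space \<mu> = UNIV \<and> sets \<mu> = ed_borel d"

definition Var :: "('a \<Rightarrow> 'a \<Rightarrow> ennreal) \<Rightarrow> 'a measure \<Rightarrow> ennreal" where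
  "Var d \<mu> = (INF x. \<integral>\<^sup>+ z. (d x z)\<^sup>2 \<partial>\<mu>)"

definition barycenter :: "('a \<Rightarrow> 'a \<Rightarrow> ennreal) \<Rightarrow> 'a measure \<Rightarrow> 'a \<Rightarrow> bool" where
  "barycenter d \<mu> x \<longleftrightarrow> (\<integral>\<^sup>+ z. (d x z)\<^sup>2 \<partial>\<mu>) = Var d \<mu>"

definition ereal_integral :: "'a measure \<Rightarrow> ('a \<Rightarrow> ereal) \<Rightarrow> ereal" where
  "ereal_integral \<mu> E =
     enn2ereal (\<integral>\<^sup>+ z. e2ennreal (E z) \<partial>\<mu>) - enn2ereal (\<integral>\<^sup>+ z. e2ennreal (- E z) \<partial>\<mu>)"

definition domE :: "('a \<Rightarrow> ereal) \<Rightarrow> 'a set" where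
  "domE E = {z. E z < \<infinity>}"

definition ed_closure :: "('a \<Rightarrow> 'a \<Rightarrow> ennreal) \<Rightarrow> 'a set \<Rightarrow> 'a set" where
  "ed_closure d A = {w. \<forall>r::real>0. \<exists>z\<in>A. d w z < ennreal r}"

definition loc_abs_cont :: "('a \<Rightarrow> 'a \<Rightarrow> ennreal) \<Rightarrow> (real \<Rightarrow> 'a) \<Rightarrow> bool" where
  "loc_abs_cont d y \<longleftrightarrow>
     (\<exists>m::real \<Rightarrow> real. (\<forall>r>0. m r \<ge> 0) \<and>
        (\<forall>a b. 0 < a \<longrightarrow> m absolutely_integrable_on {a..b}) \<and>
        (\<forall>s t. 0 < s \<longrightarrow> s \<le> t \<longrightarrow> d (y s) (y t) \<le> ennreal (integral {s..t} m)))"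

definition EVI_flow ::
  "('a \<Rightarrow> 'a \<Rightarrow> ennreal) \<Rightarrow> real \<Rightarrow> ('a \<Rightarrow> ereal) \<Rightarrow> 'a \<Rightarrow> (real \<Rightarrow> 'a) \<Rightarrow> bool" where
  "EVI_flow d K E y0 y \<longleftrightarrow>
     loc_abs_cont d y \<and>
     ((\<lambda>t. d (y t) y0) \<longlongrightarrow> 0) (at_right 0) \<and>
     (\<forall>z\<in>domE E. (\<exists>t>0. d z (y t) < \<infinity>) \<longrightarrow>
        (AE t in lborel. t > 0 \<longrightarrow>
           (\<exists>D. ((\<lambda>s. enn2real ((d (y s) z)\<^sup>2)) has_real_derivative D) (at t) \<and>
                ereal (D / 2 + K / 2 * enn2real ((d (y t) z)\<^sup>2)) \<le> E z - E (y t)))) \<and>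
     (y0 \<notin> domE E \<longrightarrow>
        Liminf (at_right 0) (\<lambda>t. E (y t)) \<ge> E y0 \<and>
        (\<forall>w\<in>ed_closure d (domE E). ((\<lambda>t. d (y t) w) \<longlongrightarrow> d y0 w) (at_right 0)))"

definition I_K :: "real \<Rightarrow> real \<Rightarrow> real" where
  "I_K K t = integral {0..t} (\<lambda>r. exp (K * r))"

end

theory Submission
  imports Defs
begin

lemma key_mono:
  fixes h M :: "real \<Rightarrow> real" and a b :: real
  assumes ab: "a \<le> b"
    and Mint: "M integrable_on {a..b}"
    and hM: "\<And>u v. a \<le> u \<Longrightarrow> u \<le> v \<Longrightarrow> v \<le> b \<Longrightarrow> h v - h u \<le> integral {u..v} M"
    and N: "negligible N"
    and der: "\<And>x. x \<in> {a..b} - N \<Longrightarrow> \<exists>D. (h has_real_derivative D) (at x) \<and> D \<le> 0"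
  shows "h b \<le> h a"
proof -
  define g where "g x = (if x \<in> N then M x else 0)" for x
  have g0: "(g has_integral 0) T" for T
    by (rule has_integral_negligible[OF N]) (auto simp: g_def)
  have gint: "g integrable_on cbox a b" using g0 by blast
  have Mint': "M integrable_on cbox a b" using Mint by simp
  have main: "h b - h a \<le> e * (b - a) + 2 * e" if e: "e > 0" for e
  proof -
    obtain \<gamma>1 where g1: "gauge \<gamma>1" and H1: "\<And>p. p tagged_partial_division_of (cbox a b) \<Longrightarrow> \<gamma>1 fine p \<Longrightarrow>
             sum (\<lambda>(x,k). norm(measure lborel k *\<^sub>R M x - integral k M)) p < e"
      by (rule Henstock_lemma[OF Mint' e]) blast
    obtain \<gamma>2 where g2: "gauge \<gamma>2" and H2: "\<And>p. p tagged_partial_division_of (cbox a b) \<Longrightarrow> \<gamma>2 fine p \<Longrightarrow>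
             sum (\<lambda>(x,k). norm(measure lborel k *\<^sub>R g x - integral k g)) p < e"
      by (rule Henstock_lemma[OF gint e]) blast
    have "\<forall>x. \<exists>\<delta>>0. x \<in> {a..b} - N \<longrightarrow> (\<forall>y. \<bar>y - x\<bar> < \<delta> \<longrightarrow>
        (x \<le> y \<longrightarrow> h y - h x \<le> e * (y - x)) \<and> (y \<le> x \<longrightarrow> h x - h y \<le> e * (x - y)))"
    proof
      fix x
      show "\<exists>\<delta>>0. x \<in> {a..b} - N \<longrightarrow> (\<forall>y. \<bar>y - x\<bar> < \<delta> \<longrightarrow>
        (x \<le> y \<longrightarrow> h y - h x \<le> e * (y - x)) \<and> (y \<le> x \<longrightarrow> h x - h y \<le> e * (x - y)))"
      proof (cases "x \<in> {a..b} - N")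
        case False then show ?thesis by (intro exI[of _ 1]) auto
      next
        case True
        then obtain D where hD: "(h has_real_derivative D) (at x)" and D: "D \<le> 0" using der by blast
        then have "(h has_derivative (\<lambda>u. D * u)) (at x)" by (simp add: has_field_derivative_def)
        then obtain \<delta> where \<delta>: "\<delta> > 0" "\<And>y. norm (y - x) < \<delta> \<Longrightarrow> norm (h y - h x - D * (y - x)) \<le> e * norm (y - x)"
          using e unfolding has_derivative_at_alt by blast
        show ?thesis
        proof (intro exI[of _ \<delta>] conjI impI allI \<delta>(1))
          fix y assume y: "\<bar>y - x\<bar> < \<delta>"
          have 1: "\<bar>h y - h x - D * (y - x)\<bar> \<le> e * \<bar>y - x\<bar>" using \<delta>(2)[of y] y by simp
          show "h y - h x \<le> e * (y - x)" if "x \<le> y"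
          proof -
            have "D * (y - x) \<le> 0" using D that by (simp add: mult_nonpos_nonneg)
            then show ?thesis using 1 that by auto
          qed
          show "h x - h y \<le> e * (x - y)" if "y \<le> x"
          proof -
            have "D * (y - x) \<ge> 0" using D that by (simp add: mult_nonpos_nonpos)
            then show ?thesis using 1 that by auto
          qed
        qed
      qed
    qed
    from choice[OF this] obtain \<delta> where \<delta>all: "\<forall>x. \<delta> x > 0 \<and> (x \<in> {a..b} - N \<longrightarrow> (\<forall>y. \<bar>y - x\<bar> < \<delta> x \<longrightarrow>
        (x \<le> y \<longrightarrow> h y - h x \<le> e * (y - x)) \<and> (y \<le> x \<longrightarrow> h x - h y \<le> e * (x - y))))"
      by blast
    have \<delta>pos: "\<And>x. \<delta> x > 0" using \<delta>all by blast
    have \<delta>: "\<And>x y. x \<in> {a..b} - N \<Longrightarrow> \<bar>y - x\<bar> < \<delta> x \<Longrightarrow>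
        (x \<le> y \<longrightarrow> h y - h x \<le> e * (y - x)) \<and> (y \<le> x \<longrightarrow> h x - h y \<le> e * (x - y))"
      using \<delta>all by blast
    define \<gamma> where "\<gamma> x = \<gamma>1 x \<inter> \<gamma>2 x \<inter> ball x (\<delta> x)" for x
    have "gauge \<gamma>" unfolding \<gamma>_def
      by (intro gauge_Int g1 g2 gauge_ball_dependent) (use \<delta>pos in auto)
    then obtain p where p: "p tagged_division_of {a..b}" and fp: "\<gamma> fine p"
      using fine_division_exists_real by metis
    have finp: "finite p" using p by (auto simp: tagged_division_of_def tagged_partial_division_of_def)
    have pp: "p tagged_partial_division_of cbox a b" using p by (auto simp: tagged_division_of_def)
    have f1: "\<gamma>1 fine p" and f2: "\<gamma>2 fine p" and f3: "\<And>x K. (x,K) \<in> p \<Longrightarrow> K \<subseteq> ball x (\<delta> x)"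
      using fp by (auto simp: fine_def \<gamma>_def)
    have pK: "\<And>x K. (x,K) \<in> p \<Longrightarrow> \<exists>u v. K = {u..v} \<and> u \<le> x \<and> x \<le> v \<and> a \<le> u \<and> v \<le> b"
    proof -
      fix x K assume xk: "(x,K) \<in> p"
      from tagged_division_ofD(2-4)[OF p xk] obtain u v where "K = cbox u v" "x \<in> K" "K \<subseteq> {a..b}" by metis
      then show "\<exists>u v. K = {u..v} \<and> u \<le> x \<and> x \<le> v \<and> a \<le> u \<and> v \<le> b"
        by (intro exI[of _ u] exI[of _ v]) auto
    qed
    define f where "f = (\<lambda>(x::real, K::real set). h (Sup K) - h (Inf K))"
    define p1 where "p1 = {(x,K) \<in> p. x \<in> N}"
    define p2 where "p2 = {(x,K) \<in> p. x \<notin> N}"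
    have "h b - h a = sum f p" using additive_tagged_division_1[OF ab p, of h] by (simp add: f_def)
    also have "\<dots> = sum f p1 + sum f p2"
    proof -
      have "p = p1 \<union> p2" "p1 \<inter> p2 = {}" by (auto simp: p1_def p2_def)
      moreover have "finite p1" "finite p2" by (rule finite_subset[OF _ finp], auto simp: p1_def p2_def)+
      ultimately show ?thesis by (metis sum.union_disjoint)
    qed
    also have "sum f p2 \<le> e * (b - a)"
    proof -
      have "sum f p2 \<le> sum (\<lambda>(x,K). e * measure lborel K) p2"
      proof (rule sum_mono)
        fix xK assume "xK \<in> p2"
        then obtain x K where xK: "xK = (x,K)" "(x,K) \<in> p" "x \<notin> N" by (auto simp: p2_def)
        then obtain u v where uv: "K = {u..v}" "u \<le> x" "x \<le> v" "a \<le> u" "v \<le> b" using pK by blast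
        have xin: "x \<in> {a..b} - N" using uv xK by auto
        have "u \<in> K" "v \<in> K" using uv by auto
        then have "u \<in> ball x (\<delta> x)" "v \<in> ball x (\<delta> x)" using f3[OF xK(2)] by blast+
        then have "\<bar>u - x\<bar> < \<delta> x" "\<bar>v - x\<bar> < \<delta> x" by (auto simp: dist_real_def)
        then have "h v - h x \<le> e * (v - x)" "h x - h u \<le> e * (x - u)"
          using \<delta>[OF xin] uv by auto
        then show "f xK \<le> (\<lambda>(x,K). e * measure lborel K) xK" using uv xK by (auto simp: f_def algebra_simps)
      qed
      also have "\<dots> \<le> sum (\<lambda>(x,K). e * measure lborel K) p"
        by (rule sum_mono2[OF finp]) (use e in \<open>auto simp: p2_def\<close>)
      also have "\<dots> = e * sum (\<lambda>(x,K). measure lborel K) p" by (simp add: sum_distrib_left case_prod_unfold)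
      also have "sum (\<lambda>(x,K). measure lborel K) p = measure lborel (cbox a b)"
        using additive_content_tagged_division[of p a b] p by simp
      finally show ?thesis using ab by simp
    qed
    also have "sum f p1 \<le> 2 * e"
    proof -
      have pp1: "p1 tagged_partial_division_of cbox a b"
        by (rule tagged_partial_division_subset[OF pp]) (auto simp: p1_def)
      have fp1: "\<gamma>1 fine p1" "\<gamma>2 fine p1" using f1 f2 by (auto simp: p1_def fine_def)
      have "sum f p1 \<le> sum (\<lambda>(x,K). measure lborel K * g x + norm(measure lborel K *\<^sub>R M x - integral K M)) p1"
      proof (rule sum_mono)
        fix xK assume "xK \<in> p1"
        then obtain x K where xK: "xK = (x,K)" "(x,K) \<in> p" "x \<in> N" by (auto simp: p1_def)
        then obtain u v where uv: "K = {u..v}" "u \<le> x" "x \<le> v" "a \<le> u" "v \<le> b" using pK by blast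
        have "f xK \<le> integral K M" using hM[of u v] uv xK by (auto simp: f_def)
        then show "f xK \<le> (\<lambda>(x,K). measure lborel K * g x + norm(measure lborel K *\<^sub>R M x - integral K M)) xK"
          using xK by (auto simp: g_def)
      qed
      also have "\<dots> = sum (\<lambda>(x,K). measure lborel K * g x) p1 + sum (\<lambda>(x,K). norm(measure lborel K *\<^sub>R M x - integral K M)) p1"
        by (simp add: sum.distrib case_prod_unfold)
      also have "sum (\<lambda>(x,K). norm(measure lborel K *\<^sub>R M x - integral K M)) p1 < e" using H1[OF pp1 fp1(1)] .
      also have "sum (\<lambda>(x,K). measure lborel K * g x) p1 \<le> sum (\<lambda>(x,K). norm(measure lborel K *\<^sub>R g x - integral K g)) p1"
      proof (rule sum_mono)
        fix xK assume "xK \<in> p1"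
        have "integral K g = 0" for K using g0 by (simp add: integral_unique)
        then show "(\<lambda>(x,K). measure lborel K * g x) xK \<le> (\<lambda>(x,K). norm(measure lborel K *\<^sub>R g x - integral K g)) xK"
          by (auto simp: case_prod_unfold)
      qed
      also have "\<dots> < e" using H2[OF pp1 fp1(2)] .
      finally show ?thesis by simp
    qed
    finally show ?thesis by simp
  qed
  show ?thesis
  proof (rule ccontr)
    assume "\<not> ?thesis"
    then have pos: "h b - h a > 0" by simp
    define e where "e = (h b - h a) / (2 * (b - a + 2))"
    have e: "e > 0" unfolding e_def using pos ab by simp
    have "h b - h a \<le> e * (b - a + 2)" using main[OF e] by (simp add: algebra_simps)
    also have "\<dots> = (h b - h a) / 2" unfolding e_def using ab by (simp add: field_simps)
    finally show False using pos by simp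
  qed
qed


definition acm :: "real \<Rightarrow> real \<Rightarrow> (real \<Rightarrow> real) \<Rightarrow> (real \<Rightarrow> real) \<Rightarrow> bool" where
  "acm a b m h \<longleftrightarrow> (\<exists>C\<ge>0. \<forall>u v. a \<le> u \<longrightarrow> u \<le> v \<longrightarrow> v \<le> b \<longrightarrow>
      \<bar>h v - h u\<bar> \<le> C * (integral {u..v} m + (v - u)))"

locale acm_ctx =
  fixes a b :: real and m :: "real \<Rightarrow> real"
  assumes ab: "a \<le> b" and mint: "m integrable_on {a..b}" and mpos: "\<And>x. x \<in> {a..b} \<Longrightarrow> 0 \<le> m x"
begin

lemma mint_sub: "a \<le> u \<Longrightarrow> v \<le> b \<Longrightarrow> m integrable_on {u..v}"
  by (rule integrable_on_subinterval[OF mint]) auto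

lemma int_nonneg: "a \<le> u \<Longrightarrow> v \<le> b \<Longrightarrow> 0 \<le> integral {u..v} m"
  by (rule integral_nonneg[OF mint_sub]) (auto intro: mpos)

lemma int_le: "a \<le> u \<Longrightarrow> u \<le> v \<Longrightarrow> v \<le> b \<Longrightarrow> integral {u..v} m \<le> integral {a..b} m"
  by (rule integral_subset_le) (auto intro: mint_sub mint mpos)

lemma acm_key:
  assumes "acm a b m h" and N: "negligible N"
    and der: "\<And>x. x \<in> {a..b} - N \<Longrightarrow> \<exists>D. (h has_real_derivative D) (at x) \<and> D \<le> 0"
  shows "h b \<le> h a"
proof -
  obtain C where C: "C \<ge> 0" "\<And>u v. a \<le> u \<Longrightarrow> u \<le> v \<Longrightarrow> v \<le> b \<Longrightarrow> \<bar>h v - h u\<bar> \<le> C * (integral {u..v} m + (v - u))"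
    using assms(1) unfolding acm_def by blast
  define M where "M x = C * (m x + 1)" for x
  have Mi: "integral {u..v} M = C * (integral {u..v} m + (v - u))" if "a \<le> u" "u \<le> v" "v \<le> b" for u v
  proof -
    have "integral {u..v} M = C * integral {u..v} (\<lambda>x. m x + 1)" unfolding M_def by simp
    also have "integral {u..v} (\<lambda>x. m x + 1) = integral {u..v} m + integral {u..v} (\<lambda>x. 1)"
      by (rule integral_add[OF mint_sub]) (use that in auto)
    finally show ?thesis using that by simp
  qed
  have "(\<lambda>x. m x + 1) integrable_on {a..b}" by (rule integrable_add[OF mint]) (rule integrable_const_ivl)
  from integrable_on_cmult_left[OF this, of C]
  have Mint: "M integrable_on {a..b}" by (simp add: M_def[abs_def])
  show ?thesis
  proof (rule key_mono[OF ab Mint _ N der])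
    fix u v assume "a \<le> u" "u \<le> v" "v \<le> b"
    then show "h v - h u \<le> integral {u..v} M" using C(2)[of u v] Mi[of u v] by simp
  qed auto
qed

lemma acm_bounded:
  assumes "acm a b m h" obtains B where "\<And>u. u \<in> {a..b} \<Longrightarrow> \<bar>h u\<bar> \<le> B"
proof -
  obtain C where C: "C \<ge> 0" "\<And>u v. a \<le> u \<Longrightarrow> u \<le> v \<Longrightarrow> v \<le> b \<Longrightarrow> \<bar>h v - h u\<bar> \<le> C * (integral {u..v} m + (v - u))"
    using assms(1) unfolding acm_def by blast
  have "\<bar>h u\<bar> \<le> \<bar>h a\<bar> + C * (integral {a..b} m + (b - a))" if "u \<in> {a..b}" for u
  proof -
    have "\<bar>h u - h a\<bar> \<le> C * (integral {a..u} m + (u - a))" using C(2)[of a u] that by auto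
    also have "\<dots> \<le> C * (integral {a..b} m + (b - a))"
      using int_le[of a u] that C(1) by (intro mult_left_mono) auto
    finally show ?thesis by linarith
  qed
  then show ?thesis using that by blast
qed

lemma acm_add: "acm a b m f \<Longrightarrow> acm a b m g \<Longrightarrow> acm a b m (\<lambda>x. f x + g x)"
proof -
  assume f: "acm a b m f" and g: "acm a b m g"
  obtain C1 where C1: "C1 \<ge> 0" "\<And>u v. a \<le> u \<Longrightarrow> u \<le> v \<Longrightarrow> v \<le> b \<Longrightarrow> \<bar>f v - f u\<bar> \<le> C1 * (integral {u..v} m + (v - u))"
    using f unfolding acm_def by blast
  obtain C2 where C2: "C2 \<ge> 0" "\<And>u v. a \<le> u \<Longrightarrow> u \<le> v \<Longrightarrow> v \<le> b \<Longrightarrow> \<bar>g v - g u\<bar> \<le> C2 * (integral {u..v} m + (v - u))"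
    using g unfolding acm_def by blast
  show ?thesis unfolding acm_def
  proof (intro exI[of _ "C1 + C2"] conjI allI impI)
    fix u v assume uv: "a \<le> u" "u \<le> v" "v \<le> b"
    have "\<bar>(f v + g v) - (f u + g u)\<bar> \<le> \<bar>f v - f u\<bar> + \<bar>g v - g u\<bar>" by linarith
    also have "\<dots> \<le> C1 * (integral {u..v} m + (v - u)) + C2 * (integral {u..v} m + (v - u))"
      using C1(2)[OF uv] C2(2)[OF uv] by linarith
    finally show "\<bar>(f v + g v) - (f u + g u)\<bar> \<le> (C1 + C2) * (integral {u..v} m + (v - u))"
      by (simp add: algebra_simps)
  qed (use C1 C2 in auto)
qed

lemma acm_cmult: "acm a b m f \<Longrightarrow> acm a b m (\<lambda>x. c * f x)"
proof -
  assume f: "acm a b m f"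
  obtain C1 where C1: "C1 \<ge> 0" "\<And>u v. a \<le> u \<Longrightarrow> u \<le> v \<Longrightarrow> v \<le> b \<Longrightarrow> \<bar>f v - f u\<bar> \<le> C1 * (integral {u..v} m + (v - u))"
    using f unfolding acm_def by blast
  show ?thesis unfolding acm_def
  proof (intro exI[of _ "\<bar>c\<bar> * C1"] conjI allI impI)
    fix u v assume uv: "a \<le> u" "u \<le> v" "v \<le> b"
    have "\<bar>c * f v - c * f u\<bar> = \<bar>c\<bar> * \<bar>f v - f u\<bar>" by (simp add: abs_mult[symmetric] algebra_simps)
    also have "\<dots> \<le> \<bar>c\<bar> * (C1 * (integral {u..v} m + (v - u)))"
      using C1(2)[OF uv] by (intro mult_left_mono) auto
    finally show "\<bar>c * f v - c * f u\<bar> \<le> \<bar>c\<bar> * C1 * (integral {u..v} m + (v - u))"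
      by (simp add: algebra_simps)
  qed (use C1 in auto)
qed

lemma acm_diff: "acm a b m f \<Longrightarrow> acm a b m g \<Longrightarrow> acm a b m (\<lambda>x. f x - g x)"
  using acm_add[of f "\<lambda>x. (-1) * g x"] acm_cmult[of g "-1"] by simp

lemma acm_mult:
  assumes f: "acm a b m f" and g: "acm a b m g" shows "acm a b m (\<lambda>x. f x * g x)"
proof -
  obtain C1 where C1: "C1 \<ge> 0" "\<And>u v. a \<le> u \<Longrightarrow> u \<le> v \<Longrightarrow> v \<le> b \<Longrightarrow> \<bar>f v - f u\<bar> \<le> C1 * (integral {u..v} m + (v - u))"
    using f unfolding acm_def by blast
  obtain C2 where C2: "C2 \<ge> 0" "\<And>u v. a \<le> u \<Longrightarrow> u \<le> v \<Longrightarrow> v \<le> b \<Longrightarrow> \<bar>g v - g u\<bar> \<le> C2 * (integral {u..v} m + (v - u))"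
    using g unfolding acm_def by blast
  obtain B1 where B1: "\<And>u. u \<in> {a..b} \<Longrightarrow> \<bar>f u\<bar> \<le> B1" using acm_bounded[OF f] by blast
  obtain B2 where B2: "\<And>u. u \<in> {a..b} \<Longrightarrow> \<bar>g u\<bar> \<le> B2" using acm_bounded[OF g] by blast
  have B1p: "B1 \<ge> 0" using B1[of a] ab by auto
  have B2p: "B2 \<ge> 0" using B2[of a] ab by auto
  show ?thesis unfolding acm_def
  proof (intro exI[of _ "B1 * C2 + B2 * C1"] conjI allI impI)
    fix u v assume uv: "a \<le> u" "u \<le> v" "v \<le> b"
    define X where "X = integral {u..v} m + (v - u)"
    have X: "X \<ge> 0" using int_nonneg[of u v] uv by (simp add: X_def)
    have "f v * g v - f u * g u = f v * (g v - g u) + g u * (f v - f u)" by (simp add: algebra_simps)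
    then have "\<bar>f v * g v - f u * g u\<bar> \<le> \<bar>f v\<bar> * \<bar>g v - g u\<bar> + \<bar>g u\<bar> * \<bar>f v - f u\<bar>"
      by (simp add: abs_mult[symmetric])
    also have "\<dots> \<le> B1 * (C2 * X) + B2 * (C1 * X)"
      using uv B1[of v] B2[of u] C1(2)[OF uv] C2(2)[OF uv]
      by (intro add_mono mult_mono) (auto simp: X_def)
    finally show "\<bar>f v * g v - f u * g u\<bar> \<le> (B1 * C2 + B2 * C1) * (integral {u..v} m + (v - u))"
      by (simp add: X_def algebra_simps)
  qed (use B1p B2p C1 C2 in auto)
qed

lemma acm_deriv:
  assumes d: "\<And>x. x \<in> {a..b} \<Longrightarrow> (g has_real_derivative g' x) (at x)"
    and L: "\<And>x. x \<in> {a..b} \<Longrightarrow> \<bar>g' x\<bar> \<le> L"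
  shows "acm a b m g"
  unfolding acm_def
proof (intro exI[of _ L] conjI allI impI)
  show L0: "0 \<le> L" using L[of a] ab by auto
  fix u v assume uv: "a \<le> u" "u \<le> v" "v \<le> b"
  have "\<bar>g v - g u\<bar> \<le> L * (v - u)"
  proof (cases "u = v")
    case True then show ?thesis by simp
  next
    case False
    then have "u < v" using uv by simp
    then obtain z where z: "u < z" "z < v" "g v - g u = (v - u) * g' z"
      using MVT2[of u v g g'] d uv by force
    have "\<bar>g' z\<bar> \<le> L" using L[of z] z uv by auto
    then show ?thesis using z uv by (simp add: abs_mult mult.commute mult_right_mono)
  qed
  also have "\<dots> \<le> L * (integral {u..v} m + (v - u))"
    using int_nonneg[of u v] uv L0 by (intro mult_left_mono) auto
  finally show "\<bar>g v - g u\<bar> \<le> L * (integral {u..v} m + (v - u))" .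
qed

lemma acm_cong: "acm a b m f \<Longrightarrow> (\<And>x. x \<in> {a..b} \<Longrightarrow> f x = g x) \<Longrightarrow> acm a b m g"
proof -
  assume f: "acm a b m f" and e: "\<And>x. x \<in> {a..b} \<Longrightarrow> f x = g x"
  obtain C1 where C1: "C1 \<ge> 0" "\<And>u v. a \<le> u \<Longrightarrow> u \<le> v \<Longrightarrow> v \<le> b \<Longrightarrow> \<bar>f v - f u\<bar> \<le> C1 * (integral {u..v} m + (v - u))"
    using f unfolding acm_def by blast
  show ?thesis unfolding acm_def
  proof (intro exI[of _ C1] conjI allI impI)
    fix u v assume uv: "a \<le> u" "u \<le> v" "v \<le> b"
    then show "\<bar>g v - g u\<bar> \<le> C1 * (integral {u..v} m + (v - u))" using C1(2)[OF uv] e[of u] e[of v] by simp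
  qed (use C1 in auto)
qed

end

definition Jf :: "real \<Rightarrow> real \<Rightarrow> real" where
  "Jf K r = (if K = 0 then r else (exp (K * r) - 1) / K)"

lemma Jf_deriv: "(Jf K has_real_derivative exp (K * r)) (at r)"
proof (cases "K = 0")
  case True
  then have e: "Jf K = (\<lambda>r. r)" by (auto simp: Jf_def)
  show ?thesis unfolding e using True by (auto intro!: derivative_eq_intros)
next
  case False
  then have e: "Jf K = (\<lambda>r. (exp (K * r) - 1) / K)" by (auto simp: Jf_def)
  show ?thesis unfolding e using False by (auto intro!: derivative_eq_intros)
qed

lemma Jf_exp: "K * Jf K r = exp (K * r) - 1"
  by (simp add: Jf_def)

lemma Jf_0[simp]: "Jf K 0 = 0" by (simp add: Jf_def)

lemma Jf_pos: "r > 0 \<Longrightarrow> Jf K r > 0"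
proof (cases "K = 0")
  case True
  then show "r > 0 \<Longrightarrow> Jf K r > 0" by (simp add: Jf_def)
next
  case False
  assume r: "r > 0"
  show ?thesis
  proof (cases "K > 0")
    case True
    then have "exp (K * r) > 1" using r by simp
    then show ?thesis using True by (simp add: Jf_def)
  next
    case F: False
    then have K: "K < 0" using False by simp
    then have "exp (K * r) < 1" using r by (simp add: mult_neg_pos)
    then show ?thesis using K by (simp add: Jf_def divide_neg_neg)
  qed
qed

lemma I_K_Jf: assumes "t \<ge> 0" shows "I_K K t = Jf K t"
proof -
  have "((\<lambda>r. exp (K * r)) has_integral (Jf K t - Jf K 0)) {0..t}"
    by (rule fundamental_theorem_of_calculus[OF assms])
       (auto simp: has_real_derivative_iff_has_vector_derivative[symmetric] intro: DERIV_subset[OF Jf_deriv])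
  then show ?thesis unfolding I_K_def by (simp add: integral_unique)
qed

lemma Jf_cont: "continuous_on UNIV (Jf K)"
  using Jf_deriv DERIV_isCont continuous_at_imp_continuous_on by blast


lemma em_sym: "ext_metric d \<Longrightarrow> d x y = d y x" by (simp add: ext_metric_def)
lemma em_tri: "ext_metric d \<Longrightarrow> d x z \<le> d x y + d y z" by (simp add: ext_metric_def)
lemma em_zero: "ext_metric d \<Longrightarrow> d x y = 0 \<longleftrightarrow> x = y" by (simp add: ext_metric_def)

lemma em_fin: assumes "ext_metric d" "d x y < top" "d y z < top" shows "d x z < top"
proof -
  have "d x z \<le> d x y + d y z" by (rule em_tri[OF assms(1)])
  moreover have "d x y + d y z < top" using assms(2,3) by simp
  ultimately show ?thesis by (rule le_less_trans)
qed

lemma em_rtri: assumes "ext_metric d" "d x y < top" "d y z < top"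
  shows "enn2real (d x z) \<le> enn2real (d x y) + enn2real (d y z)"
proof -
  have s: "d x y + d y z < top" using assms(2,3) by simp
  have "enn2real (d x z) \<le> enn2real (d x y + d y z)"
    by (rule enn2real_mono[OF em_tri[OF assms(1)] s])
  also have "\<dots> = enn2real (d x y) + enn2real (d y z)" by (rule enn2real_plus[OF assms(2,3)])
  finally show ?thesis .
qed

lemma em_rdiff: assumes "ext_metric d" "d a b < top" "d b z < top"
  shows "\<bar>enn2real (d a z) - enn2real (d b z)\<bar> \<le> enn2real (d a b)"
proof -
  have az: "d a z < top" by (rule em_fin[OF assms])
  have ba: "d b a < top" using assms(2) em_sym[OF assms(1), of a b] by simp
  have 1: "enn2real (d a z) \<le> enn2real (d a b) + enn2real (d b z)" by (rule em_rtri[OF assms])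
  have 2: "enn2real (d b z) \<le> enn2real (d b a) + enn2real (d a z)" by (rule em_rtri[OF assms(1) ba az])
  have 3: "d b a = d a b" by (rule em_sym[OF assms(1)])
  show ?thesis using 1 2 unfolding 3 by linarith
qed

lemma enn2real_sq: "enn2real (x\<^sup>2) = (enn2real x)\<^sup>2"
  by (simp add: power2_eq_square enn2real_mult)

locale flowctx =
  fixes d :: "'a \<Rightarrow> 'a \<Rightarrow> ennreal" and y :: "real \<Rightarrow> 'a" and m :: "real \<Rightarrow> real"
  assumes em: "ext_metric d"
    and mpos: "\<And>r. r > 0 \<Longrightarrow> m r \<ge> 0"
    and mabs: "\<And>a b. 0 < a \<Longrightarrow> m absolutely_integrable_on {a..b}"
    and mbound: "\<And>s t. 0 < s \<Longrightarrow> s \<le> t \<Longrightarrow> d (y s) (y t) \<le> ennreal (integral {s..t} m)"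
begin

lemma mint: "0 < a \<Longrightarrow> m integrable_on {a..b}"
  using mabs absolutely_integrable_on_def by blast

lemma ctx: "0 < a \<Longrightarrow> a \<le> b \<Longrightarrow> acm_ctx a b m"
  by unfold_locales (auto intro: mint mpos)

lemma curve_fin: assumes "s > 0" "t > 0" shows "d (y s) (y t) < top"
proof (cases "s \<le> t")
  case True then show ?thesis using mbound[OF assms(1) True] by (simp add: le_less_trans)
next
  case False
  then have "d (y t) (y s) < top" using mbound[OF assms(2), of s] by (simp add: le_less_trans)
  then show ?thesis using em_sym[OF em] by metis
qed

lemma curve_real: assumes "0 < u" "u \<le> v" shows "enn2real (d (y u) (y v)) \<le> integral {u..v} m"
proof -
  have "0 \<le> integral {u..v} m" using assms by (intro integral_nonneg mint) (auto intro: mpos)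
  then show ?thesis using mbound[OF assms] by (intro enn2real_leI) auto
qed

lemma dist_acm:
  assumes "0 < a" "a \<le> b" and z: "d z (y a) < top"
  shows "acm a b m (\<lambda>r. enn2real (d (y r) z))"
  unfolding acm_def
proof (intro exI[of _ 1] conjI allI impI)
  fix u v assume uv: "a \<le> u" "u \<le> v" "v \<le> b"
  have zu: "d (y u) z < top"
    using em_fin[OF em curve_fin[of u a] ] z em_sym[OF em, of z] assms uv by auto
  have "\<bar>enn2real (d (y v) z) - enn2real (d (y u) z)\<bar> \<le> enn2real (d (y v) (y u))"
    by (rule em_rdiff[OF em _ zu]) (rule curve_fin, use assms uv in auto)
  also have "\<dots> \<le> integral {u..v} m" using curve_real[of u v] em_sym[OF em, of "y u" "y v"] assms uv by simp
  also have "\<dots> \<le> 1 * (integral {u..v} m + (v - u))" using uv by simp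
  finally show "\<bar>enn2real (d (y v) z) - enn2real (d (y u) z)\<bar> \<le> 1 * (integral {u..v} m + (v - u))" .
qed simp

lemma seq_cont:
  assumes t: "t > 0" and sn: "sn \<longlonglongrightarrow> t"
  shows "(\<lambda>n. d (y (sn n)) (y t)) \<longlonglongrightarrow> 0"
proof -
  define F where "F x = integral {t/2..x} m" for x
  have Fc: "continuous_on {t/2..t+1} F" unfolding F_def
    by (rule indefinite_integral_continuous_1[OF mint]) (use t in auto)
  have ev: "eventually (\<lambda>n. sn n \<in> {t/2<..<t+1}) sequentially"
    using sn t by (intro topological_tendstoD) auto
  have FL: "(\<lambda>n. F (sn n)) \<longlonglongrightarrow> F t"
    by (rule continuous_on_tendsto_compose[OF Fc sn]) (use t in auto, auto intro: eventually_mono[OF ev])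
  have bound: "d (y (sn n)) (y t) \<le> ennreal \<bar>F (sn n) - F t\<bar>" if "sn n \<in> {t/2<..<t+1}" for n
  proof (cases "sn n \<le> t")
    case True
    have sn0: "sn n > 0" using that t by simp
    have c: "integral {t/2..sn n} m + integral {sn n..t} m = integral {t/2..t} m"
      using Henstock_Kurzweil_Integration.integral_combine[where a="t/2" and c="sn n" and b=t and f=m] True that t mint[of "t/2" t] by auto
    have nn: "0 \<le> integral {sn n..t} m" by (rule integral_nonneg[OF mint[OF sn0]]) (use sn0 mpos in auto)
    have "integral {sn n..t} m = \<bar>F (sn n) - F t\<bar>" unfolding F_def using c nn by arith
    then show ?thesis using mbound[of "sn n" t] True that t by auto
  next
    case False
    have c: "integral {t/2..t} m + integral {t..sn n} m = integral {t/2..sn n} m"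
      using Henstock_Kurzweil_Integration.integral_combine[where a="t/2" and c=t and b="sn n" and f=m] False that t mint[of "t/2" "sn n"] by auto
    have nn: "0 \<le> integral {t..sn n} m" by (rule integral_nonneg[OF mint[OF t]]) (use t mpos in auto)
    have "integral {t..sn n} m = \<bar>F (sn n) - F t\<bar>" unfolding F_def using c nn by arith
    then show ?thesis using mbound[of t "sn n"] False that t em_sym[OF em, of "y t" "y (sn n)"] by auto
  qed
  have "(\<lambda>n. ennreal \<bar>F (sn n) - F t\<bar>) \<longlonglongrightarrow> ennreal \<bar>F t - F t\<bar>"
    by (intro tendsto_intros FL)
  then have lim0: "(\<lambda>n. ennreal \<bar>F (sn n) - F t\<bar>) \<longlonglongrightarrow> 0" by simp
  show ?thesis
    by (rule tendsto_sandwich[OF _ _ tendsto_const lim0])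
       (auto intro: eventually_mono[OF ev] bound)
qed

end


locale evictx = flowctx d y m
  for d :: "'a \<Rightarrow> 'a \<Rightarrow> ennreal" and y :: "real \<Rightarrow> 'a" and m :: "real \<Rightarrow> real" +
  fixes K :: real and E :: "'a \<Rightarrow> ereal" and y0 :: 'a
  assumes lsc: "ed_lsc d E"
    and noinf: "\<And>x. E x \<noteq> -\<infinity>"
    and y0lim: "((\<lambda>t. d (y t) y0) \<longlongrightarrow> 0) (at_right 0)"
    and evi: "\<forall>z\<in>domE E. (\<exists>t>0. d z (y t) < \<infinity>) \<longrightarrow>
        (AE t in lborel. t > 0 \<longrightarrow>
           (\<exists>D. ((\<lambda>s. enn2real ((d (y s) z)\<^sup>2)) has_real_derivative D) (at t) \<and>
                ereal (D / 2 + K / 2 * enn2real ((d (y t) z)\<^sup>2)) \<le> E z - E (y t)))"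
begin

lemma exp_bound: assumes "0 \<le> x" "x \<le> t" shows "exp (K * x) \<le> exp (\<bar>K\<bar> * t)"
proof -
  have "K * x \<le> \<bar>K\<bar> * x" using assms(1) by (simp add: mult_right_mono)
  also have "\<bar>K\<bar> * x \<le> \<bar>K\<bar> * t" using assms(2) by (simp add: mult_left_mono)
  finally show ?thesis by simp
qed

lemma ev_y0: "eventually (\<lambda>s. d (y s) y0 < 1) (at_right 0)"
  using y0lim by (rule order_tendstoD) simp

lemma y_fin: assumes "t > 0" shows "d (y t) y0 < top"
proof -
  obtain b where b: "b > 0" "\<And>s. s > 0 \<Longrightarrow> s < b \<Longrightarrow> d (y s) y0 < 1"
    using ev_y0 unfolding eventually_at_right_field by auto
  have b1: "d (y (b/2)) y0 < 1" using b by simp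
  have "d (y (b/2)) y0 < top" using less_trans[OF b1 ennreal_one_less_top] .
  moreover have "d (y t) (y (b/2)) < top" using curve_fin assms b by simp
  ultimately show ?thesis using em_fin[OF em] by blast
qed

lemma z_fin0: assumes "t0 > 0" "d z (y t0) < top" shows "d z y0 < top"
  using em_fin[OF em assms(2) y_fin[OF assms(1)]] .

lemma z_fin: assumes "t0 > 0" "d z (y t0) < top" "s > 0" shows "d z (y s) < top"
  using em_fin[OF em assms(2) curve_fin[OF assms(1,3)]] .

lemma negl_of_AE: assumes "AE r in lborel. P r" obtains N where "negligible N" "\<And>r. \<not> P r \<Longrightarrow> r \<in> N"
proof -
  have "AE r in lebesgue. P r" using assms by (rule AE_completion)
  then obtain N where N: "{r \<in> space lebesgue. \<not> P r} \<subseteq> N" "emeasure lebesgue N = 0" "N \<in> sets lebesgue"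
    by (rule AE_E)
  then have "negligible N" by (simp add: negligible_iff_null_sets null_setsI)
  then show ?thesis using that N(1) by auto
qed

lemma int_evi:
  assumes zE: "E z < \<infinity>" and zfin: "d z (y s) < top" and s: "0 < s" "s \<le> t"
    and cond: "\<And>r. r \<in> {s..t} \<Longrightarrow> E z - E (y r) \<le> ereal c"
  shows "exp (K * t) * enn2real ((d (y t) z)\<^sup>2) - 2 * c * Jf K t
       \<le> exp (K * s) * enn2real ((d (y s) z)\<^sup>2) - 2 * c * Jf K s"
proof -
  define \<phi> where "\<phi> r = enn2real ((d (y r) z)\<^sup>2)" for r
  define h where "h r = exp (K * r) * \<phi> r - 2 * c * Jf K r" for r
  interpret acm_ctx s t m using ctx s by blast
  have zd: "z \<in> domE E" using zE by (simp add: domE_def)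
  have "\<exists>t>0. d z (y t) < \<infinity>" using zfin s by auto
  then have AEP: "AE r in lborel. r > 0 \<longrightarrow>
           (\<exists>D. (\<phi> has_real_derivative D) (at r) \<and> ereal (D / 2 + K / 2 * \<phi> r) \<le> E z - E (y r))"
    using evi zd unfolding \<phi>_def[abs_def] by blast
  obtain N where N: "negligible N" and NP: "\<And>r. \<not> (r > 0 \<longrightarrow>
           (\<exists>D. (\<phi> has_real_derivative D) (at r) \<and> ereal (D / 2 + K / 2 * \<phi> r) \<le> E z - E (y r))) \<Longrightarrow> r \<in> N"
    using negl_of_AE[OF AEP] by blast
  have acm_exp: "acm s t m (\<lambda>r. exp (K * r))"
  proof (rule acm_deriv)
    fix x assume x: "x \<in> {s..t}"
    show "((\<lambda>r. exp (K * r)) has_real_derivative K * exp (K * x)) (at x)"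
      by (auto intro!: derivative_eq_intros)
    have "exp (K * x) \<le> exp (\<bar>K\<bar> * t)" using x s by (intro exp_bound) auto
    then show "\<bar>K * exp (K * x)\<bar> \<le> \<bar>K\<bar> * exp (\<bar>K\<bar> * t)"
      by (simp add: abs_mult mult_left_mono)
  qed
  have acm_J: "acm s t m (Jf K)"
  proof (rule acm_deriv)
    fix x assume x: "x \<in> {s..t}"
    show "(Jf K has_real_derivative exp (K * x)) (at x)" by (rule Jf_deriv)
    have "exp (K * x) \<le> exp (\<bar>K\<bar> * t)" using x s by (intro exp_bound) auto
    then show "\<bar>exp (K * x)\<bar> \<le> exp (\<bar>K\<bar> * t)" by simp
  qed
  have acm_rho: "acm s t m (\<lambda>r. enn2real (d (y r) z))"
    by (rule dist_acm[OF s]) (use zfin in simp)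
  have acm_phi: "acm s t m \<phi>"
    by (rule acm_cong[OF acm_mult[OF acm_rho acm_rho]]) (simp add: \<phi>_def power2_eq_square enn2real_mult)
  have acm_h: "acm s t m h"
    unfolding h_def by (intro acm_diff acm_mult acm_exp acm_phi acm_cmult acm_J)
  have "h t \<le> h s"
  proof (rule acm_key[OF acm_h N])
    fix x assume x: "x \<in> {s..t} - N"
    then have xpos: "x > 0" using s by auto
    from x NP xpos obtain D where D: "(\<phi> has_real_derivative D) (at x)"
        and DE: "ereal (D / 2 + K / 2 * \<phi> x) \<le> E z - E (y x)" by blast
    have "ereal (D / 2 + K / 2 * \<phi> x) \<le> ereal c" using DE cond[of x] x by (blast intro: order_trans)
    then have Dc: "D + K * \<phi> x - 2 * c \<le> 0" by simp
    have "(h has_real_derivative (K * exp (K * x) * \<phi> x + exp (K * x) * D - 2 * c * exp (K * x))) (at x)"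
      unfolding h_def by (auto intro!: derivative_eq_intros D Jf_deriv simp: algebra_simps)
    moreover have "K * exp (K * x) * \<phi> x + exp (K * x) * D - 2 * c * exp (K * x) = exp (K * x) * (D + K * \<phi> x - 2 * c)"
      by (simp add: algebra_simps)
    moreover have "exp (K * x) * (D + K * \<phi> x - 2 * c) \<le> 0"
      using Dc by (simp add: mult_nonneg_nonpos)
    ultimately show "\<exists>D. (h has_real_derivative D) (at x) \<and> D \<le> 0" by metis
  qed
  then show ?thesis unfolding h_def \<phi>_def .
qed

end


context evictx
begin

lemma liminf_le_const: "(\<And>n. X n \<le> C) \<Longrightarrow> liminf X \<le> (C::ereal)"
  by (rule order_trans[OF Liminf_le_Limsup Limsup_bounded]) auto

lemma E_lsc_seq: assumes t: "t > 0" and sn: "sn \<longlonglongrightarrow> t"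
  shows "E (y t) \<le> liminf (\<lambda>n. E (y (sn n)))"
proof -
  have L: "\<forall>x xs. ((\<lambda>n. d (xs n) x) \<longlonglongrightarrow> 0) \<longrightarrow> E x \<le> liminf (\<lambda>n. E (xs n))"
    using lsc unfolding ed_lsc_def .
  show ?thesis using L[rule_format, of "\<lambda>n. y (sn n)" "y t"] seq_cont[OF t sn] by simp
qed

lemma E_mono: assumes a: "0 < a" "a \<le> b" shows "E (y b) \<le> E (y a)"
proof (rule ccontr)
  assume "\<not> ?thesis"
  then have lt: "E (y a) < E (y b)" by simp
  then obtain c0 where c0: "E (y a) < ereal c0" "ereal c0 < E (y b)"
    by (metis ereal_dense2 less_ereal.simps(1) ereal_less_eq(1) ereal_infty_less(2) less_le_trans order.strict_trans)
  define S where "S = {s \<in> {a..b}. E (y s) \<le> ereal c0}"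
  have aS: "a \<in> S" using c0 a by (auto simp: S_def)
  have bdd: "bdd_above S" by (auto simp: S_def bdd_above_def)
  define ss where "ss = Sup S"
  have "ss \<in> closure S" unfolding ss_def using aS bdd by (intro closure_contains_Sup) auto
  then obtain sn where snS: "\<And>n. sn n \<in> S" and snl: "sn \<longlonglongrightarrow> ss"
    unfolding closure_sequential by blast
  have ssab: "ss \<in> {a..b}"
  proof -
    have "closure S \<subseteq> {a..b}" by (rule closure_minimal) (auto simp: S_def)
    then show ?thesis using \<open>ss \<in> closure S\<close> by blast
  qed
  then have ss0: "ss > 0" using a by auto
  have Ess: "E (y ss) \<le> ereal c0"
  proof -
    have "E (y ss) \<le> liminf (\<lambda>n. E (y (sn n)))" by (rule E_lsc_seq[OF ss0 snl])
    also have "\<dots> \<le> ereal c0" by (rule liminf_le_const) (use snS in \<open>auto simp: S_def\<close>)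
    finally show ?thesis .
  qed
  have above: "E (y r) > ereal c0" if "r \<in> {ss<..b}" for r
  proof (rule ccontr)
    assume "\<not> ?thesis"
    then have "r \<in> S" using that ssab a by (auto simp: S_def)
    then have "r \<le> ss" unfolding ss_def using bdd by (rule cSup_upper)
    then show False using that by auto
  qed
  define z where "z = y ss"
  obtain ez where ez: "E z = ereal ez" using Ess noinf[of z] unfolding z_def
    by (cases "E (y ss)") auto
  have cond: "E z - E (y r) \<le> ereal 0" if "r \<in> {ss..b}" for r
  proof (cases "r = ss")
    case True then show ?thesis using ez by (simp add: z_def)
  next
    case False
    then have "E (y r) > ereal c0" using that above by auto
    then have "ereal ez < E (y r)" using Ess ez unfolding z_def by (metis le_less_trans)
    then show ?thesis using ez by (cases "E (y r)") auto
  qed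
  have zz: "d z (y ss) = 0" using em_zero[OF em] by (simp add: z_def)
  have zfin: "d z (y ss) < top" using zz by simp
  have zE: "E z < \<infinity>" using ez by simp
  have "exp (K * b) * enn2real ((d (y b) z)\<^sup>2) - 2 * 0 * Jf K b
       \<le> exp (K * ss) * enn2real ((d (y ss) z)\<^sup>2) - 2 * 0 * Jf K ss"
    by (rule int_evi[OF zE zfin ss0]) (use ssab cond in auto)
  then have "exp (K * b) * enn2real ((d (y b) z)\<^sup>2) \<le> 0" using zz em_sym[OF em, of z "y ss"] by (simp add: z_def)
  then have "enn2real ((d (y b) z)\<^sup>2) \<le> 0" by (simp add: mult_le_0_iff)
  then have "enn2real (d (y b) z) = 0" by (simp add: enn2real_sq)
  moreover have "d (y b) z < top" unfolding z_def using curve_fin ssab a by auto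
  ultimately have "d (y b) z = 0" by (auto simp: enn2real_eq_0_iff)
  then have "y b = z" using em_zero[OF em] by blast
  then show False using c0 Ess unfolding z_def by auto
qed

lemma rho_lim: assumes "d y0 z < top"
  shows "((\<lambda>s. enn2real (d (y s) z)) \<longlongrightarrow> enn2real (d y0 z)) (at_right 0)"
proof -
  have ev: "eventually (\<lambda>s. norm (enn2real (d (y s) z) - enn2real (d y0 z)) \<le> enn2real (d (y s) y0)) (at_right 0)"
  proof (rule eventually_mono[OF ev_y0])
    fix s assume "d (y s) y0 < 1"
    then have "d (y s) y0 < top" using less_trans ennreal_one_less_top by blast
    then show "norm (enn2real (d (y s) z) - enn2real (d y0 z)) \<le> enn2real (d (y s) y0)"
      using em_rdiff[OF em _ assms] by simp
  qed
  have "((\<lambda>s. enn2real (d (y s) y0)) \<longlongrightarrow> 0) (at_right 0)"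
    using tendsto_enn2real[of "\<lambda>s. d (y s) y0" 0 "at_right 0"] y0lim by simp
  from Lim_null_comparison[OF ev this]
  have "((\<lambda>s. enn2real (d (y s) z) - enn2real (d y0 z)) \<longlongrightarrow> 0) (at_right 0)" .
  then show ?thesis by (simp add: LIM_zero_iff)
qed

lemma star:
  assumes t: "t > 0" and zE: "E z < \<infinity>" and z0: "d z y0 < top" and et: "E (y t) = ereal et"
  shows "exp (K * t) * (enn2real (d (y t) z))\<^sup>2 - 2 * (real_of_ereal (E z) - et) * Jf K t
       \<le> (enn2real (d y0 z))\<^sup>2"
proof -
  define c where "c = real_of_ereal (E z) - et"
  obtain ez where ez: "E z = ereal ez" using zE noinf[of z] by (cases "E z") auto
  have c: "c = ez - et" using ez by (simp add: c_def)
  define H where "H s = exp (K * s) * (enn2real (d (y s) z))\<^sup>2 - 2 * c * Jf K s" for s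
  have Hle: "H t \<le> H s" if s: "0 < s" "s \<le> t" for s
  proof -
    have zfin: "d z (y s) < top" using em_fin[OF em z0] y_fin[OF s(1)] em_sym[OF em, of y0 "y s"] by simp
    have cond: "E z - E (y r) \<le> ereal c" if "r \<in> {s..t}" for r
    proof -
      have "E (y t) \<le> E (y r)" using that s by (intro E_mono) auto
      then have "ereal et \<le> E (y r)" using et by simp
      then show ?thesis using ez c by (cases "E (y r)") auto
    qed
    show ?thesis using int_evi[OF zE zfin s cond] unfolding H_def by (simp add: enn2real_sq)
  qed
  have dz: "d y0 z < top" using z0 em_sym[OF em, of z y0] by simp
  have "(H \<longlongrightarrow> exp (K * 0) * (enn2real (d y0 z))\<^sup>2 - 2 * c * Jf K 0) (at_right 0)"
    unfolding H_def
    by (intro tendsto_intros rho_lim[OF dz] tendsto_within_subset[OF continuous_on_def[THEN iffD1, OF Jf_cont, rule_format]]) auto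
  then have HL: "(H \<longlongrightarrow> (enn2real (d y0 z))\<^sup>2) (at_right 0)" by simp
  have "H t \<le> (enn2real (d y0 z))\<^sup>2"
  proof (rule tendsto_le[OF _ HL tendsto_const])
    show "eventually (\<lambda>s. H t \<le> H s) (at_right 0)"
      unfolding eventually_at_right_field using t by (intro exI[of _ t]) (auto intro: Hle)
  qed simp
  then show ?thesis unfolding H_def c_def .
qed

end


lemma less_add_real: assumes "(a::ennreal) < p" shows "\<exists>r>0. a + ennreal r < p"
proof -
  obtain \<alpha> where a: "a = ennreal \<alpha>" "\<alpha> \<ge> 0" using assms by (cases a rule: ennreal_cases) auto
  show ?thesis
  proof (cases p rule: ennreal_cases)
    case (real \<pi>)
    then have ap: "\<alpha> < \<pi>" using assms a by (simp add: ennreal_less_iff)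
    have h: "\<alpha> + (\<pi> - \<alpha>) / 2 < \<pi>" using ap by (simp add: field_simps)
    have h0: "0 < \<pi>" using a ap by linarith
    have "a + ennreal ((\<pi> - \<alpha>) / 2) = ennreal (\<alpha> + (\<pi> - \<alpha>) / 2)"
      using a ap by (simp add: ennreal_plus)
    also have "\<dots> < ennreal \<pi>" by (rule ennreal_lessI[OF h0 h])
    also have "ennreal \<pi> = p" using real by simp
    finally show ?thesis using ap by (intro exI[of _ "(\<pi> - \<alpha>) / 2"]) auto
  next
    case top
    then show ?thesis using a by (intro exI[of _ 1]) (auto simp: ennreal_plus[symmetric] simp del: ennreal_plus)
  qed
qed

lemma ed_open_sets: "sets \<mu> = ed_borel d \<Longrightarrow> U \<in> ed_open d \<Longrightarrow> U \<in> sets \<mu>"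
  unfolding ed_borel_def by (auto intro: sigma_sets.Basic)

lemma meas_d:
  assumes em: "ext_metric d" and sets: "sets \<mu> = ed_borel d" and sp: "space \<mu> = UNIV"
  shows "(\<lambda>z. d x z) \<in> borel_measurable \<mu>"
proof (rule borel_measurableI_less)
  fix p :: ennreal
  have "{z. d x z < p} \<in> ed_open d" unfolding ed_open_def
  proof (safe)
    fix z assume z: "d x z < p"
    obtain r where r: "r > 0" "d x z + ennreal r < p" using less_add_real[OF z] by blast
    show "\<exists>r>0. \<forall>w. d z w < ennreal r \<longrightarrow> w \<in> {z. d x z < p}"
    proof (intro exI[of _ r] conjI allI impI r(1))
      fix w assume w: "d z w < ennreal r"
      have "d x w \<le> d x z + d z w" by (rule em_tri[OF em])
      also have "\<dots> \<le> d x z + ennreal r" using w by (intro add_left_mono) simp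
      finally show "w \<in> {z. d x z < p}" using r(2) by simp
    qed
  qed
  then show "{z \<in> space \<mu>. d x z < p} \<in> sets \<mu>" using sp ed_open_sets[OF sets] by simp
qed

lemma meas_E:
  assumes em: "ext_metric d" and lsc: "ed_lsc d E" and sets: "sets \<mu> = ed_borel d" and sp: "space \<mu> = UNIV"
  shows "E \<in> borel_measurable \<mu>"
proof (rule borel_measurableI_greater)
  fix p :: ereal
  have L: "\<forall>x xs. ((\<lambda>n. d (xs n) x) \<longlonglongrightarrow> 0) \<longrightarrow> E x \<le> liminf (\<lambda>n. E (xs n))"
    using lsc unfolding ed_lsc_def .
  have "{z. p < E z} \<in> ed_open d" unfolding ed_open_def
  proof (safe, rule ccontr)
    fix z assume z: "p < E z" and no: "\<not> (\<exists>r>0. \<forall>w. d z w < ennreal r \<longrightarrow> w \<in> {z. p < E z})"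
    have "\<forall>n. \<exists>w. d z w < ennreal (inverse (real (Suc n))) \<and> E w \<le> p"
    proof
      fix n
      have "inverse (real (Suc n)) > 0" by simp
      then have "\<not> (\<forall>w. d z w < ennreal (inverse (real (Suc n))) \<longrightarrow> w \<in> {z. p < E z})" using no by blast
      then show "\<exists>w. d z w < ennreal (inverse (real (Suc n))) \<and> E w \<le> p" by (auto simp: not_less)
    qed
    then obtain w where w: "\<And>n. d z (w n) < ennreal (inverse (real (Suc n)))" "\<And>n. E (w n) \<le> p"
      by metis
    have lim: "(\<lambda>n. ennreal (inverse (real (Suc n)))) \<longlonglongrightarrow> 0"
      using tendsto_ennrealI[OF LIMSEQ_inverse_real_of_nat] by simp
    have bnd: "d (w n) z \<le> ennreal (inverse (real (Suc n)))" for n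
      using w(1)[of n] em_sym[OF em, of z "w n"] by simp
    have "(\<lambda>n. d (w n) z) \<longlonglongrightarrow> 0"
      by (rule tendsto_sandwich[OF _ _ tendsto_const lim]) (use bnd in \<open>auto intro: always_eventually\<close>)
    then have "E z \<le> liminf (\<lambda>n. E (w n))" using L[rule_format, of w z] by simp
    also have "\<dots> \<le> p" by (rule order_trans[OF Liminf_le_Limsup Limsup_bounded]) (auto intro!: always_eventually w(2))
    finally show False using z by simp
  qed
  then show "{z \<in> space \<mu>. p < E z} \<in> sets \<mu>" using sp ed_open_sets[OF sets] by simp
qed

lemma ereal_inf_minus: "(\<infinity>::ereal) - x - ereal a + ereal b = \<infinity>"
  by (cases x) auto


lemma enn2ereal_fin: "x < top \<Longrightarrow> enn2ereal x = ereal (enn2real x)"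
  by (metis enn2ereal_ennreal enn2real_nonneg ennreal_enn2real)

lemma part1:
  fixes d :: "'a \<Rightarrow> 'a \<Rightarrow> ennreal" and K :: real and E :: "'a \<Rightarrow> ereal"
    and \<mu> :: "'a measure"
  assumes em: "ext_metric d" and noinf: "\<forall>x. E x \<noteq> -\<infinity>" and lsc: "ed_lsc d E"
    and prob: "ed_prob d \<mu>" and Vfin: "Var d \<mu> < \<infinity>"
    and eps: "\<epsilon> \<ge> 0" and hy: "(\<integral>\<^sup>+ z. (d y z)\<^sup>2 \<partial>\<mu>) \<le> Var d \<mu> + ennreal \<epsilon>"
    and flow: "EVI_flow d K E y yt" and t: "t > 0"
  shows "E (yt t) \<le> ereal_integral \<mu> E - ereal (K / 2 * enn2real (Var d \<mu>)) + ereal (\<epsilon> / (2 * I_K K t))"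
proof -
  have ps: "prob_space \<mu>" and sp: "space \<mu> = UNIV" and sets: "sets \<mu> = ed_borel d"
    using prob by (auto simp: ed_prob_def)
  interpret prob_space \<mu> by (rule ps)
  have lac: "loc_abs_cont d yt" and y0lim: "((\<lambda>t. d (yt t) y) \<longlongrightarrow> 0) (at_right 0)"
    and evi: "\<forall>z\<in>domE E. (\<exists>t>0. d z (yt t) < \<infinity>) \<longrightarrow>
        (AE t in lborel. t > 0 \<longrightarrow>
           (\<exists>D. ((\<lambda>s. enn2real ((d (yt s) z)\<^sup>2)) has_real_derivative D) (at t) \<and>
                ereal (D / 2 + K / 2 * enn2real ((d (yt t) z)\<^sup>2)) \<le> E z - E (yt t)))"
    using flow unfolding EVI_flow_def by blast+
  obtain m where mpos: "\<forall>r>0. m r \<ge> 0" and mabs: "\<forall>a b. 0 < a \<longrightarrow> m absolutely_integrable_on {a..b}"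
      and mb: "\<forall>s t. 0 < s \<longrightarrow> s \<le> t \<longrightarrow> d (yt s) (yt t) \<le> ennreal (integral {s..t} m)"
    using lac unfolding loc_abs_cont_def by blast
  interpret evictx d yt m K E y
    by unfold_locales (use em mpos mabs mb lsc noinf y0lim evi in auto)
  note md[measurable] = meas_d[OF em sets sp]
  note mE[measurable] = meas_E[OF em lsc sets sp]
  define V where "V = enn2real (Var d \<mu>)"
  have VV: "Var d \<mu> = ennreal V" using Vfin by (simp add: V_def)
  have V0: "V \<ge> 0" by (simp add: V_def)
  define P where "P = (\<integral>\<^sup>+ z. e2ennreal (E z) \<partial>\<mu>)"
  define Q where "Q = (\<integral>\<^sup>+ z. e2ennreal (- E z) \<partial>\<mu>)"
  have EI: "ereal_integral \<mu> E = enn2ereal P - enn2ereal Q" by (simp add: ereal_integral_def P_def Q_def)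
  show ?thesis
  proof (cases "P = \<infinity>")
    case True
    then show ?thesis by (simp add: EI ereal_inf_minus)
  next
    case False
    have meP: "(\<lambda>z. e2ennreal (E z)) \<in> borel_measurable \<mu>" by measurable
    have AE1: "AE z in \<mu>. E z \<noteq> \<infinity>"
      using nn_integral_noteq_infinite[OF meP False[unfolded P_def]] by (auto elim!: eventually_mono)
    have mdy2: "(\<lambda>z. (d y z)\<^sup>2) \<in> borel_measurable \<mu>" by measurable
    have VeF: "Var d \<mu> + ennreal \<epsilon> < top" using VV by simp
    have fin2: "(\<integral>\<^sup>+ z. (d y z)\<^sup>2 \<partial>\<mu>) < top" using hy VeF by (rule le_less_trans)
    have AE2: "AE z in \<mu>. d y z < top"
      using nn_integral_noteq_infinite[OF mdy2] fin2
      by (auto elim!: eventually_mono simp: power2_eq_square ennreal_mult_eq_top_iff less_top)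
    define G where "G z \<longleftrightarrow> E z < \<infinity> \<and> d y z < top" for z
    have AEG: "AE z in \<mu>. G z"
      using AE1 AE2 by eventually_elim (auto simp: G_def less_top[symmetric])
    have exG: "\<exists>z. G z"
    proof (rule ccontr)
      assume "\<not> ?thesis"
      then have "AE z in \<mu>. False" using AEG by (auto elim: eventually_mono)
      then show False by simp
    qed
    have Et: "E (yt t) \<noteq> \<infinity>"
    proof
      assume inf: "E (yt t) = \<infinity>"
      obtain z0 where z0: "G z0" using exG by blast
      have zd: "z0 \<in> domE E" using z0 by (simp add: G_def domE_def)
      obtain e0 where e0: "E z0 = ereal e0" using z0 noinf by (cases "E z0") (auto simp: G_def)
      have "d z0 (yt t) < top"
        using em_fin[OF em _ y_fin[OF t, unfolded em_sym[OF em, of "yt t" y]], of z0] z0 em_sym[OF em, of y z0]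
        by (simp add: G_def)
      then have "\<exists>t>0. d z0 (yt t) < \<infinity>" using t by auto
      then have AEr: "AE r in lborel. r > 0 \<longrightarrow>
           (\<exists>D. ((\<lambda>s. enn2real ((d (yt s) z0)\<^sup>2)) has_real_derivative D) (at r) \<and>
                ereal (D / 2 + K / 2 * enn2real ((d (yt r) z0)\<^sup>2)) \<le> E z0 - E (yt r))"
        using evi zd by blast
      obtain N where N: "negligible N" and NP: "\<And>r. \<not> (r > 0 \<longrightarrow>
           (\<exists>D. ((\<lambda>s. enn2real ((d (yt s) z0)\<^sup>2)) has_real_derivative D) (at r) \<and>
                ereal (D / 2 + K / 2 * enn2real ((d (yt r) z0)\<^sup>2)) \<le> E z0 - E (yt r))) \<Longrightarrow> r \<in> N"
        using negl_of_AE[OF AEr] by blast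
      have "{t/2..t} \<subseteq> N"
      proof
        fix r assume r: "r \<in> {t/2..t}"
        then have r0: "r > 0" using t by auto
        have "E (yt t) \<le> E (yt r)" using r r0 by (intro E_mono) auto
        then have "E (yt r) = \<infinity>" using inf by simp
        then have "E z0 - E (yt r) = -\<infinity>" using e0 by simp
        then show "r \<in> N" using NP[of r] r0 by auto
      qed
      then have "negligible (cbox (t/2) t)" using negligible_subset[OF N] by simp
      moreover have "box (t/2) t \<noteq> {}" using t by (simp add: box_real)
      ultimately show False using negligible_interval(1)[of "t/2" t] by simp
    qed
    then obtain et where et: "E (yt t) = ereal et" using noinf by (cases "E (yt t)") auto
    define J where "J = Jf K t"
    have J0: "J > 0" using Jf_pos t by (simp add: J_def)
    have IJ: "I_K K t = J" using I_K_Jf t by (simp add: J_def)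
    have ex: "exp (K * t) = 1 + K * J" using Jf_exp[of K t] by (simp add: J_def)
    define a where "a z = (enn2real (d y z))\<^sup>2" for z
    define b where "b z = (enn2real (d (yt t) z))\<^sup>2" for z
    define f where "f z = real_of_ereal (E z)" for z
    have ma[measurable]: "a \<in> borel_measurable \<mu>" unfolding a_def by measurable
    have mb'[measurable]: "b \<in> borel_measurable \<mu>" unfolding b_def by measurable
    have mf[measurable]: "f \<in> borel_measurable \<mu>" unfolding f_def by measurable
    have Ef: "AE z in \<mu>. E z = ereal (f z)"
      using AEG by eventually_elim (use noinf in \<open>auto simp: G_def f_def ereal_real\<close>)
    have starz: "AE z in \<mu>. exp (K * t) * b z - 2 * (f z - et) * J \<le> a z"
      using AEG
    proof eventually_elim
      case (elim z)
      then have zE: "E z < \<infinity>" and z0: "d z y < top" using em_sym[OF em, of z y] by (auto simp: G_def)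
      show ?case using star[OF t zE z0 et] unfolding a_def b_def f_def J_def .
    qed
    have a_nn: "(\<integral>\<^sup>+ z. ennreal (a z) \<partial>\<mu>) = (\<integral>\<^sup>+ z. (d y z)\<^sup>2 \<partial>\<mu>)"
    proof (rule nn_integral_cong_AE)
      show "AE z in \<mu>. ennreal (a z) = (d y z)\<^sup>2" using AEG
      proof eventually_elim
        case (elim z)
        then have "d y z < top" by (simp add: G_def)
        then show ?case by (simp add: a_def ennreal_power[symmetric])
      qed
    qed
    have a_int: "integrable \<mu> a"
      by (rule integrableI_nonneg) (use fin2 a_nn in \<open>auto simp: a_def\<close>)
    have a_le: "integral\<^sup>L \<mu> a \<le> V + \<epsilon>"
    proof -
      have "ennreal (integral\<^sup>L \<mu> a) = (\<integral>\<^sup>+ z. ennreal (a z) \<partial>\<mu>)"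
        by (rule nn_integral_eq_integral[symmetric, OF a_int]) (simp add: a_def)
      also have "\<dots> \<le> ennreal (V + \<epsilon>)" using a_nn hy VV eps V0 by (simp add: ennreal_plus)
      finally have "ennreal (integral\<^sup>L \<mu> a) \<le> ennreal (V + \<epsilon>)" .
      moreover have "0 \<le> V + \<epsilon>" using eps V0 by simp
      ultimately show ?thesis using ennreal_le_iff by blast
    qed
    have Pfin: "P < top" using False by (simp add: less_top)
    have fp_nn: "(\<integral>\<^sup>+ z. ennreal (max (f z) 0) \<partial>\<mu>) = P"
      unfolding P_def
    proof (rule nn_integral_cong_AE)
      show "AE z in \<mu>. ennreal (max (f z) 0) = e2ennreal (E z)" using Ef
      proof eventually_elim
        case (elim z)
        show ?case by (cases "f z \<ge> 0") (auto simp: elim max_def ennreal_neg)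
      qed
    qed
    have fp_int: "integrable \<mu> (\<lambda>z. max (f z) 0)"
      by (rule integrableI_nonneg) (use fp_nn Pfin in auto)
    have f_lower: "AE z in \<mu>. f z \<ge> et - a z / (2 * J)" using starz
    proof eventually_elim
      case (elim z)
      have "0 \<le> exp (K * t) * b z" by (simp add: b_def)
      then have "- (2 * J * (f z - et)) \<le> a z" using elim by (simp add: algebra_simps)
      then have "- (f z - et) \<le> a z / (2 * J)" using J0 by (simp add: field_simps)
      then show ?case by simp
    qed
    have g_int: "integrable \<mu> (\<lambda>z. max (f z) 0 + \<bar>et\<bar> + a z / (2 * J))"
      using fp_int a_int by (intro Bochner_Integration.integrable_add integrable_divide_zero) auto
    have f_int: "integrable \<mu> f"
    proof (rule Bochner_Integration.integrable_bound[OF g_int mf])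
      show "AE z in \<mu>. norm (f z) \<le> norm (max (f z) 0 + \<bar>et\<bar> + a z / (2 * J))" using f_lower
      proof eventually_elim
        case (elim z)
        have a0: "0 \<le> a z / (2 * J)" using J0 by (simp add: a_def)
        show ?case using elim a0 by (auto simp: max_def abs_if)
      qed
    qed
    have EIf: "ereal_integral \<mu> E = ereal (integral\<^sup>L \<mu> f)"
    proof -
      have P': "P = (\<integral>\<^sup>+ z. ennreal (f z) \<partial>\<mu>)" unfolding P_def
        by (rule nn_integral_cong_AE) (use Ef in \<open>auto elim!: eventually_mono\<close>)
      have Q': "Q = (\<integral>\<^sup>+ z. ennreal (- f z) \<partial>\<mu>)" unfolding Q_def
        by (rule nn_integral_cong_AE) (use Ef in \<open>auto elim!: eventually_mono\<close>)
      have nf: "(\<integral>\<^sup>+ z. ennreal (norm (f z)) \<partial>\<mu>) < \<infinity>" using f_int by (simp add: integrable_iff_bounded)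
      have "Q \<le> (\<integral>\<^sup>+ z. ennreal (norm (f z)) \<partial>\<mu>)" unfolding Q'
        by (rule nn_integral_mono) (auto intro: ennreal_leI)
      then have Qfin: "Q < top" using nf by (simp add: le_less_trans)
      have "integral\<^sup>L \<mu> f = enn2real P - enn2real Q"
        unfolding P' Q' by (rule real_lebesgue_integral_def[OF f_int])
      then show ?thesis using Pfin Qfin by (simp add: EI enn2ereal_fin)
    qed
    have B_int: "integrable \<mu> (\<lambda>z. (a z + 2 * J * f z - 2 * J * et) / exp (K * t))"
      using a_int f_int by (intro integrable_divide_zero Bochner_Integration.integrable_diff Bochner_Integration.integrable_add Bochner_Integration.integrable_mult_right) auto
    have b_int: "integrable \<mu> b"
    proof (rule Bochner_Integration.integrable_bound[OF B_int mb'])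
      show "AE z in \<mu>. norm (b z) \<le> norm ((a z + 2 * J * f z - 2 * J * et) / exp (K * t))" using starz
      proof eventually_elim
        case (elim z)
        have b0: "0 \<le> b z" by (simp add: b_def)
        have "exp (K * t) * b z \<le> a z + 2 * J * f z - 2 * J * et" using elim by (simp add: algebra_simps)
        then have bz: "b z \<le> (a z + 2 * J * f z - 2 * J * et) / exp (K * t)" by (simp add: field_simps)
        have "norm (b z) = b z" using b0 by simp
        also have "\<dots> \<le> (a z + 2 * J * f z - 2 * J * et) / exp (K * t)" by (rule bz)
        also have "\<dots> \<le> \<bar>a z + 2 * J * f z - 2 * J * et\<bar> / exp (K * t)" by (rule divide_right_mono) auto
        also have "\<dots> = norm ((a z + 2 * J * f z - 2 * J * et) / exp (K * t))" by simp
        finally show ?case .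
      qed
    qed
    have b_ge: "V \<le> integral\<^sup>L \<mu> b"
    proof -
      have b_nn: "(\<integral>\<^sup>+ z. ennreal (b z) \<partial>\<mu>) = (\<integral>\<^sup>+ z. (d (yt t) z)\<^sup>2 \<partial>\<mu>)"
      proof (rule nn_integral_cong_AE)
        show "AE z in \<mu>. ennreal (b z) = (d (yt t) z)\<^sup>2" using AEG
        proof eventually_elim
          case (elim z)
          then have "d y z < top" by (simp add: G_def)
          moreover have "d (yt t) y < top" by (rule y_fin[OF t])
          ultimately have "d (yt t) z < top" using em_fin[OF em] by blast
          then show ?case by (simp add: b_def ennreal_power[symmetric])
        qed
      qed
      have "Var d \<mu> \<le> (\<integral>\<^sup>+ z. (d (yt t) z)\<^sup>2 \<partial>\<mu>)" unfolding Var_def by (rule INF_lower) simp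
      also have "\<dots> = ennreal (integral\<^sup>L \<mu> b)"
        unfolding b_nn[symmetric] by (rule nn_integral_eq_integral[OF b_int]) (simp add: b_def)
      finally have "Var d \<mu> \<le> ennreal (integral\<^sup>L \<mu> b)" .
      moreover have "0 \<le> integral\<^sup>L \<mu> b" by (rule integral_nonneg_AE) (simp add: b_def)
      ultimately show ?thesis unfolding V_def by (intro enn2real_leI)
    qed
    have ineq: "integral\<^sup>L \<mu> (\<lambda>z. exp (K * t) * b z - 2 * J * f z + 2 * J * et) \<le> integral\<^sup>L \<mu> a"
    proof (rule integral_mono_AE)
      show "integrable \<mu> (\<lambda>z. exp (K * t) * b z - 2 * J * f z + 2 * J * et)"
        using b_int f_int by (intro Bochner_Integration.integrable_diff Bochner_Integration.integrable_add Bochner_Integration.integrable_mult_right) auto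
      show "AE z in \<mu>. exp (K * t) * b z - 2 * J * f z + 2 * J * et \<le> a z" using starz
        by eventually_elim (simp add: algebra_simps)
    qed (rule a_int)
    have "integral\<^sup>L \<mu> (\<lambda>z. exp (K * t) * b z - 2 * J * f z + 2 * J * et)
        = exp (K * t) * integral\<^sup>L \<mu> b - 2 * J * integral\<^sup>L \<mu> f + 2 * J * et"
      using b_int f_int by (simp add: prob_space)
    then have main: "exp (K * t) * integral\<^sup>L \<mu> b - 2 * J * integral\<^sup>L \<mu> f + 2 * J * et \<le> V + \<epsilon>"
      using ineq a_le by linarith
    have "exp (K * t) * V \<le> exp (K * t) * integral\<^sup>L \<mu> b" using b_ge by simp
    then have "(1 + K * J) * V \<le> exp (K * t) * integral\<^sup>L \<mu> b" by (simp only: ex)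
    then have "(1 + K * J) * V - 2 * J * integral\<^sup>L \<mu> f + 2 * J * et \<le> V + \<epsilon>" using main by linarith
    then have "2 * J * et \<le> 2 * J * (integral\<^sup>L \<mu> f - K / 2 * V + \<epsilon> / (2 * J))"
      using J0 by (simp add: algebra_simps)
    then have "et \<le> integral\<^sup>L \<mu> f - K / 2 * V + \<epsilon> / (2 * J)" using J0 by simp
    then show ?thesis using et EIf IJ by (simp add: V_def)
  qed
qed


theorem theorem5p2:
  fixes d :: "'a \<Rightarrow> 'a \<Rightarrow> ennreal" and K :: real and E :: "'a \<Rightarrow> ereal"
    and \<mu> :: "'a measure"
  assumes "ext_metric d"
    and "\<forall>x. E x \<noteq> -\<infinity>"
    and "ed_lsc d E"
    and "ed_prob d \<mu>"
    and "Var d \<mu> < \<infinity>"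
  shows "(\<forall>(\<epsilon>::real) y yt. \<epsilon> \<ge> 0 \<longrightarrow>
            (\<integral>\<^sup>+ z. (d y z)\<^sup>2 \<partial>\<mu>) \<le> Var d \<mu> + ennreal \<epsilon> \<longrightarrow>
            EVI_flow d K E y yt \<longrightarrow>
            (\<forall>t>0. E (yt t) \<le> ereal_integral \<mu> E - ereal (K / 2 * enn2real (Var d \<mu>))
                                + ereal (\<epsilon> / (2 * I_K K t))))
       \<and> (\<forall>yb yt. barycenter d \<mu> yb \<longrightarrow> EVI_flow d K E yb yt \<longrightarrow>
            E yb \<le> ereal_integral \<mu> E
                    - ereal (K / 2 * enn2real (\<integral>\<^sup>+ z. (d yb z)\<^sup>2 \<partial>\<mu>)))"
proof (intro conjI allI impI)
  fix \<epsilon> :: real and y :: 'a and yt :: "real \<Rightarrow> 'a" and t :: real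
  assume "\<epsilon> \<ge> 0" "(\<integral>\<^sup>+ z. (d y z)\<^sup>2 \<partial>\<mu>) \<le> Var d \<mu> + ennreal \<epsilon>" "EVI_flow d K E y yt" "t > 0"
  then show "E (yt t) \<le> ereal_integral \<mu> E - ereal (K / 2 * enn2real (Var d \<mu>)) + ereal (\<epsilon> / (2 * I_K K t))"
    using part1[OF assms] by blast
next
  fix yb yt
  assume bar: "barycenter d \<mu> yb" and flow: "EVI_flow d K E yb yt"
  have hb: "(\<integral>\<^sup>+ z. (d yb z)\<^sup>2 \<partial>\<mu>) = Var d \<mu>" using bar by (simp add: barycenter_def)
  define R where "R = ereal_integral \<mu> E - ereal (K / 2 * enn2real (Var d \<mu>))"
  have bnd: "E (yt t) \<le> R" if t: "t > 0" for t
  proof -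
    have "E (yt t) \<le> ereal_integral \<mu> E - ereal (K / 2 * enn2real (Var d \<mu>)) + ereal (0 / (2 * I_K K t))"
      by (rule part1[OF assms _ _ flow t]) (simp_all add: hb)
    then show ?thesis by (simp add: R_def)
  qed
  have y0lim: "((\<lambda>t. d (yt t) yb) \<longlongrightarrow> 0) (at_right 0)" using flow unfolding EVI_flow_def by blast
  define xs where "xs n = yt (inverse (real (Suc n)))" for n
  have fl: "filterlim (\<lambda>n. inverse (real (Suc n))) (at_right 0) sequentially"
    using LIMSEQ_inverse_real_of_nat unfolding filterlim_at by auto
  have "(\<lambda>n. d (xs n) yb) \<longlonglongrightarrow> 0" unfolding xs_def
    by (rule filterlim_compose[OF y0lim fl])
  then have "E yb \<le> liminf (\<lambda>n. E (xs n))"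
    using assms(3) unfolding ed_lsc_def by blast
  also have "\<dots> \<le> R"
    by (rule order_trans[OF Liminf_le_Limsup Limsup_bounded]) (auto intro!: always_eventually bnd simp: xs_def)
  finally show "E yb \<le> ereal_integral \<mu> E - ereal (K / 2 * enn2real (\<integral>\<^sup>+ z. (d yb z)\<^sup>2 \<partial>\<mu>))"
    by (simp add: R_def hb)
qed


end
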